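(* Consider a star graph on $m$ nodes (one hub adjacent to all other nodes, no other edges) and an SIS infection (without external infection) with infection rate $\beta=\Omega(m^{\epsilon-1})$ for some constant $\epsilon>0$ and recovery rate $1$. Suppose only the hub is infected at time $t=0$. Then at the time when the first node recovery occurs, the number of infected nodes is $\Omega(m^{\epsilon/3})$ with probability at least $1-O\left(m^{-\epsilon/3}\right)$.
   Context: In the SIS infection, each node is susceptible or infected; a susceptible node becomes infected at rate $\beta$ times its number of infected neighbors, and each infected node recovers (becomes susceptible) at rate $1$. *)

theory Defs
  imports "HOL-Probability.Probability"
begin

text \<open>A state is the set S of infected nodes. A susceptible node v gets infected at rate
  beta times its number of infected neighbours; an infected node recovers at rate 1.
  Events: Inl v = infection of v, Inr u = recovery of u.  The embedded jump chain of
  the continuous-time Markov chain picks the next event with probability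
  (rate of event) / (total rate).\<close>

definition infection_rate :: "(nat \<Rightarrow> nat \<Rightarrow> bool) \<Rightarrow> nat \<Rightarrow> real \<Rightarrow> nat set \<Rightarrow> nat \<Rightarrow> real" where
  "infection_rate adj m \<beta> S v =
     (if v < m \<and> v \<notin> S then \<beta> * real (card {u \<in> S. adj u v}) else 0)"

definition recovery_rate :: "nat set \<Rightarrow> nat \<Rightarrow> real" where
  "recovery_rate S u = (if u \<in> S then 1 else 0)"

definition total_rate :: "(nat \<Rightarrow> nat \<Rightarrow> bool) \<Rightarrow> nat \<Rightarrow> real \<Rightarrow> nat set \<Rightarrow> real" where
  "total_rate adj m \<beta> S =
     (\<Sum>v<m. infection_rate adj m \<beta> S v) + (\<Sum>u<m. recovery_rate S u)"

definition sis_next_event :: "(nat \<Rightarrow> nat \<Rightarrow> bool) \<Rightarrow> nat \<Rightarrow> real \<Rightarrow> nat set \<Rightarrow> (nat + nat) pmf" where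
  "sis_next_event adj m \<beta> S =
     embed_pmf (\<lambda>e. case e of
        Inl v \<Rightarrow> infection_rate adj m \<beta> S v / total_rate adj m \<beta> S
      | Inr u \<Rightarrow> recovery_rate S u / total_rate adj m \<beta> S)"

text \<open>Number of infected nodes at the moment the first recovery occurs (counted just
  before that recovery), running the jump chain from infected set S for at most
  n further infection events (with n = m this bound is never reached, since at most
  m infections can happen before every node is infected).\<close>
primrec sis_first_recovery ::
  "(nat \<Rightarrow> nat \<Rightarrow> bool) \<Rightarrow> nat \<Rightarrow> real \<Rightarrow> nat \<Rightarrow> nat set \<Rightarrow> nat pmf" where
  "sis_first_recovery adj m \<beta> 0 S = return_pmf (card S)"
| "sis_first_recovery adj m \<beta> (Suc n) S =
     bind_pmf (sis_next_event adj m \<beta> S)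
       (\<lambda>e. case e of
          Inl v \<Rightarrow> sis_first_recovery adj m \<beta> n (insert v S)
        | Inr u \<Rightarrow> return_pmf (card S))"

definition star_adj :: "nat \<Rightarrow> nat \<Rightarrow> bool" where
  "star_adj u v \<longleftrightarrow> u \<noteq> v \<and> (u = 0 \<or> v = 0)"

definition star_first_recovery :: "nat \<Rightarrow> real \<Rightarrow> nat pmf" where
  "star_first_recovery m \<beta> = sis_first_recovery star_adj m \<beta> m {0}"

end

theory Submission
  imports Defs "HOL-Real_Asymp.Real_Asymp"
begin

lemma prob_bind_pmf:
  "measure_pmf.prob (bind_pmf M N) X = (\<integral>x. measure_pmf.prob (N x) X \<partial>measure_pmf M)"
  unfolding measure_pmf_bind
  by (rule measure_pmf.measure_bind[where N="count_space UNIV"])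
     (auto simp: measurable_pmf_measure2 space_subprob_algebra measure_pmf.subprob_space_axioms)

lemma ev: "\<forall>\<^sub>F m in sequentially. real m powr (1/3) + 1 \<le> real m / 2"
  by real_asymp

lemma set_frec: "finite S \<Longrightarrow> set_pmf (sis_first_recovery adj m \<beta> n S) \<subseteq> {k. card S \<le> k}"
proof (induction n arbitrary: S)
  case 0 then show ?case by simp
next
  case (Suc n)
  show ?case
  proof
    fix k assume "k \<in> set_pmf (sis_first_recovery adj m \<beta> (Suc n) S)"
    then obtain e :: "nat + nat" where k: "k \<in> set_pmf (case e of Inl v \<Rightarrow> sis_first_recovery adj m \<beta> n (insert v S)
        | Inr u \<Rightarrow> return_pmf (card S))" by auto
    show "k \<in> {k. card S \<le> k}"
    proof (cases e)
      case (Inl v)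
      with k Suc.IH[of "insert v S"] Suc.prems have "card (insert v S) \<le> k" by auto
      moreover have "card S \<le> card (insert v S)" using Suc.prems by (simp add: card_mono subset_insertI)
      ultimately show ?thesis by simp
    next
      case (Inr u) with k show ?thesis by simp
    qed
  qed
qed

lemma pmf_next:
  assumes b: "\<beta> \<ge> 0" and S: "S \<subseteq> {..<m}" "S \<noteq> {}"
  shows "pmf (sis_next_event adj m \<beta> S) e = (case e of
        Inl v \<Rightarrow> infection_rate adj m \<beta> S v / total_rate adj m \<beta> S
      | Inr u \<Rightarrow> recovery_rate S u / total_rate adj m \<beta> S)"
    and "total_rate adj m \<beta> S = (\<Sum>v<m. infection_rate adj m \<beta> S v) + real (card S)"
proof -
  have fin: "finite S" using S finite_subset by blast
  have inf0: "\<And>v. infection_rate adj m \<beta> S v \<ge> 0" using b by (simp add: infection_rate_def)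
  have rec: "(\<Sum>u<m. recovery_rate S u) = real (card S)"
  proof -
    have "(\<Sum>u<m. recovery_rate S u) = (\<Sum>u\<in>{..<m}. if u \<in> S then 1 else 0)"
      by (simp add: recovery_rate_def)
    also have "\<dots> = real (card ({..<m} \<inter> S))" by (simp add: sum.If_cases)
    also have "{..<m} \<inter> S = S" using S by blast
    finally show ?thesis .
  qed
  show T: "total_rate adj m \<beta> S = (\<Sum>v<m. infection_rate adj m \<beta> S v) + real (card S)"
    by (simp add: total_rate_def rec)
  have Tpos: "total_rate adj m \<beta> S > 0"
  proof -
    have "card S > 0" using fin S by (simp add: card_gt_0_iff)
    moreover have "(\<Sum>v<m. infection_rate adj m \<beta> S v) \<ge> 0" by (rule sum_nonneg) (simp add: inf0)
    ultimately show ?thesis using T by linarith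
  qed
  define f where "f = (\<lambda>e::nat+nat. case e of
        Inl v \<Rightarrow> infection_rate adj m \<beta> S v / total_rate adj m \<beta> S
      | Inr u \<Rightarrow> recovery_rate S u / total_rate adj m \<beta> S)"
  have nn: "\<And>x. 0 \<le> f x" using Tpos inf0 by (auto simp: f_def recovery_rate_def split: sum.split)
  have "(\<integral>\<^sup>+x. ennreal (f x) \<partial>count_space UNIV) = (\<Sum>x\<in>Inl ` {..<m} \<union> Inr ` {..<m}. ennreal (f x))"
  proof (rule nn_integral_count_space')
    fix x :: "nat + nat" assume "x \<notin> Inl ` {..<m} \<union> Inr ` {..<m}"
    then show "ennreal (f x) = 0" using S
      by (cases x) (auto simp: f_def infection_rate_def recovery_rate_def)
  qed auto
  also have "\<dots> = ennreal (\<Sum>x\<in>Inl ` {..<m} \<union> Inr ` {..<m}. f x)"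
    using nn by (simp add: sum_ennreal)
  also have "(\<Sum>x\<in>Inl ` {..<m} \<union> Inr ` {..<m}. f x) = (\<Sum>x\<in>Inl ` {..<m}. f x) + (\<Sum>x\<in>Inr ` {..<m}. f x)"
    by (rule sum.union_disjoint) auto
  also have "\<dots> = (\<Sum>v<m. infection_rate adj m \<beta> S v / total_rate adj m \<beta> S) + (\<Sum>u<m. recovery_rate S u / total_rate adj m \<beta> S)"
    by (simp add: sum.reindex f_def)
  also have "\<dots> = total_rate adj m \<beta> S / total_rate adj m \<beta> S"
    by (simp only: sum_divide_distrib[symmetric] add_divide_distrib[symmetric] total_rate_def)
  also have "\<dots> = 1" using Tpos by simp
  finally have one: "(\<integral>\<^sup>+x. ennreal (f x) \<partial>count_space UNIV) = 1" by simp
  show "pmf (sis_next_event adj m \<beta> S) e = (case e of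
        Inl v \<Rightarrow> infection_rate adj m \<beta> S v / total_rate adj m \<beta> S
      | Inr u \<Rightarrow> recovery_rate S u / total_rate adj m \<beta> S)"
    unfolding sis_next_event_def f_def[symmetric]
    using pmf_embed_pmf[OF nn one] by (simp add: f_def)
qed

lemma good_prob:
  assumes b: "\<beta> > 0" and S: "S \<subseteq> {..<m}" "0 \<in> S" and sK: "card S < K" and Km: "K < m"
  shows "1 - measure_pmf.prob (sis_next_event star_adj m \<beta> S) (Inl ` ({..<m} - S))
          \<le> real (card S) / (\<beta> * real (m - K))"
proof -
  have fin: "finite S" using S finite_subset by blast
  have Sne: "S \<noteq> {}" using S by blast
  let ?i = "infection_rate star_adj m \<beta> S"
  let ?T = "total_rate star_adj m \<beta> S"
  define I where "I = (\<Sum>v\<in>{..<m} - S. ?i v)"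
  have "(\<Sum>v<m. ?i v) = I" unfolding I_def
    by (rule sum.mono_neutral_right) (auto simp: infection_rate_def)
  hence T: "?T = I + real (card S)" using pmf_next(2)[of \<beta> S m star_adj] b S Sne by simp
  have Ige: "I \<ge> \<beta> * real (m - card S)"
  proof -
    have "(\<Sum>v\<in>{..<m} - S. \<beta>) \<le> I" unfolding I_def
    proof (rule sum_mono)
      fix v assume v: "v \<in> {..<m} - S"
      then have "v \<noteq> 0" using S by (metis DiffD2)
      then have "0 \<in> {u \<in> S. star_adj u v}" using S by (simp add: star_adj_def)
      then have "card {u \<in> S. star_adj u v} \<ge> 1" using fin
        by (metis (no_types, lifting) One_nat_def Suc_leI card_gt_0_iff empty_iff finite_subset mem_Collect_eq subsetI)
      then show "\<beta> \<le> ?i v" using v b by (simp add: infection_rate_def)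
    qed
    moreover have "card ({..<m} - S) = m - card S" using S fin by (simp add: card_Diff_subset)
    ultimately show ?thesis by (simp add: mult.commute)
  qed
  have Ipos: "I > 0"
  proof -
    have "real (m - card S) > 0" using sK Km by simp
    then show ?thesis using Ige b by (smt (verit) mult_pos_pos)
  qed
  have "measure_pmf.prob (sis_next_event star_adj m \<beta> S) (Inl ` ({..<m} - S))
      = (\<Sum>x\<in>Inl ` ({..<m} - S). pmf (sis_next_event star_adj m \<beta> S) x)"
    by (rule measure_measure_pmf_finite) simp
  also have "\<dots> = (\<Sum>v\<in>{..<m} - S. ?i v / ?T)"
    using pmf_next(1)[of \<beta> S m star_adj] b S Sne by (simp add: sum.reindex)
  also have "\<dots> = I / ?T" unfolding I_def by (simp add: sum_divide_distrib)
  finally have PG: "measure_pmf.prob (sis_next_event star_adj m \<beta> S) (Inl ` ({..<m} - S)) = I / (I + real (card S))"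
    using T by simp
  have "1 - I / (I + real (card S)) = real (card S) / (I + real (card S))"
    using Ipos by (simp add: field_simps)
  also have "\<dots> \<le> real (card S) / I" using Ipos by (simp add: frac_le)
  also have "\<dots> \<le> real (card S) / (\<beta> * real (m - K))"
  proof (rule divide_left_mono)
    have "real (m - K) \<le> real (m - card S)" using sK Km by simp
    then have "\<beta> * real (m - K) \<le> \<beta> * real (m - card S)" using b by simp
    then show "\<beta> * real (m - K) \<le> I" using Ige by linarith
    show "0 < I * (\<beta> * real (m - K))" using Ipos b Km by simp
  qed simp
  finally show ?thesis using PG by simp
qed

lemma key:
  assumes b: "\<beta> > 0" and Km: "K < m"
  shows "S \<subseteq> {..<m} \<Longrightarrow> 0 \<in> S \<Longrightarrow> K \<le> n + card S \<Longrightarrow>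
    measure_pmf.prob (sis_first_recovery star_adj m \<beta> n S) {k. K \<le> k}
      \<ge> 1 - (\<Sum>j\<in>{card S..<K}. real j) / (\<beta> * real (m - K))"
proof (induction n arbitrary: S)
  case 0
  then show ?case by simp
next
  case (Suc n)
  have fin: "finite S" using Suc.prems finite_subset by blast
  show ?case
  proof (cases "K \<le> card S")
    case True
    have "set_pmf (sis_first_recovery star_adj m \<beta> (Suc n) S) \<subseteq> {k. K \<le> k}"
      using set_frec[OF fin, of star_adj m \<beta> "Suc n"] True by auto
    then have "measure_pmf.prob (sis_first_recovery star_adj m \<beta> (Suc n) S) {k. K \<le> k} = 1"
      by (simp add: measure_pmf.prob_eq_1 AE_measure_pmf_iff subset_eq)
    then show ?thesis using True by simp
  next
    case False
    let ?s = "card S"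
    let ?D = "\<beta> * real (m - K)"
    define T' where "T' = (\<Sum>j\<in>{Suc ?s..<K}. real j) / ?D"
    define q where "q = real ?s / ?D"
    define G :: "(nat + nat) set" where "G = Inl ` ({..<m} - S)"
    let ?N = "sis_next_event star_adj m \<beta> S"
    define g :: "nat + nat \<Rightarrow> real" where "g = (\<lambda>e. measure_pmf.prob (case e of
          Inl v \<Rightarrow> sis_first_recovery star_adj m \<beta> n (insert v S)
        | Inr u \<Rightarrow> return_pmf (card S)) {k. K \<le> k})"
    have Dpos: "?D > 0" using b Km by simp
    have q0: "q \<ge> 0" unfolding q_def by (rule divide_nonneg_pos[OF _ Dpos]) simp
    have T0: "T' \<ge> 0" unfolding T'_def by (rule divide_nonneg_pos[OF sum_nonneg Dpos]) simp
    have sumsplit: "(\<Sum>j\<in>{?s..<K}. real j) = real ?s + (\<Sum>j\<in>{Suc ?s..<K}. real j)"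
      using False by (simp add: sum.atLeast_Suc_lessThan)
    have rhs: "1 - (\<Sum>j\<in>{?s..<K}. real j) / ?D = 1 - q - T'"
      unfolding sumsplit q_def T'_def by (simp add: add_divide_distrib)
    have gb: "(1 - T') * indicator G e \<le> g e" for e
    proof (cases "e \<in> G")
      case True
      then obtain v where v: "e = Inl v" "v < m" "v \<notin> S" unfolding G_def by auto
      have "card (insert v S) = Suc ?s" using fin v by simp
      moreover have "insert v S \<subseteq> {..<m}" "0 \<in> insert v S" using Suc.prems v by auto
      moreover have "K \<le> n + card (insert v S)" using Suc.prems v fin by simp
      ultimately have "1 - T' \<le> g e" using Suc.IH[of "insert v S"] v unfolding g_def T'_def by simp
      then show ?thesis using True by simp
    next
      case False
      then show ?thesis by (simp add: g_def)
    qed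
    have int1: "integrable (measure_pmf ?N) g"
      by (rule measure_pmf.integrable_const_bound[where B=1]) (auto simp: g_def)
    have int2: "integrable (measure_pmf ?N) (\<lambda>e. (1 - T') * indicator G e)"
      by (rule measure_pmf.integrable_const_bound[where B="\<bar>1 - T'\<bar>"]) (auto simp: indicator_def)
    have "measure_pmf.prob (sis_first_recovery star_adj m \<beta> (Suc n) S) {k. K \<le> k} = (\<integral>e. g e \<partial>measure_pmf ?N)"
      by (simp add: prob_bind_pmf g_def)
    also have "\<dots> \<ge> (\<integral>e. (1 - T') * indicator G e \<partial>measure_pmf ?N)"
      by (rule integral_mono[OF int2 int1 gb])
    also have "(\<integral>e. (1 - T') * indicator G e \<partial>measure_pmf ?N) = (1 - T') * measure_pmf.prob ?N G"
      by simp
    finally have P: "measure_pmf.prob (sis_first_recovery star_adj m \<beta> (Suc n) S) {k. K \<le> k} \<ge> (1 - T') * measure_pmf.prob ?N G" .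
    have PG: "1 - measure_pmf.prob ?N G \<le> q"
      unfolding G_def q_def using good_prob[OF b Suc.prems(1,2) _ Km] False by simp
    have P0: "measure_pmf.prob (sis_first_recovery star_adj m \<beta> (Suc n) S) {k. K \<le> k} \<ge> 0" by simp
    have "1 - q - T' \<le> measure_pmf.prob (sis_first_recovery star_adj m \<beta> (Suc n) S) {k. K \<le> k}"
    proof (cases "1 - T' \<ge> 0")
      case True
      have "(1 - T') * (1 - q) \<le> (1 - T') * measure_pmf.prob ?N G"
        using PG True by (intro mult_left_mono) auto
      moreover have "1 - q - T' \<le> (1 - T') * (1 - q)" using T0 q0 by (simp add: algebra_simps)
      ultimately show ?thesis using P by linarith
    next
      case False
      then show ?thesis using P0 q0 by linarith
    qed
    then show ?thesis using rhs by simp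
  qed
qed

lemma final_m:
  assumes c: "c > 0" and e: "0 < \<epsilon>" "\<epsilon> < 1" and m1: "real m \<ge> 1"
    and bb: "b \<ge> c * real m powr (\<epsilon> - 1)"
    and mm: "real m powr (1/3) + 1 \<le> real m / 2"
  shows "measure_pmf.prob (star_first_recovery m b) {k. real k \<ge> 1 * real m powr (\<epsilon> / 3)}
           \<ge> 1 - 8 / c * real m powr (- \<epsilon> / 3)"
proof -
  define x where "x = real m powr (\<epsilon> / 3)"
  define y where "y = real m powr (- \<epsilon> / 3)"
  define z where "z = real m powr \<epsilon>"
  have mpos: "real m > 0" using m1 by simp
  have x1: "x \<ge> 1" unfolding x_def using m1 e by (simp add: ge_one_powr_ge_zero)
  have x3: "x \<le> real m powr (1/3)" unfolding x_def using m1 e by (intro powr_mono) auto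
  have zpos: "z > 0" unfolding z_def using mpos by simp
  have ypos: "y > 0" unfolding y_def using mpos by simp
  have xx: "x * x = y * z" unfolding x_def y_def z_def using mpos
    by (simp add: powr_add[symmetric])
  have bz: "c * real m powr (\<epsilon> - 1) * real m = c * z" unfolding z_def using mpos
    by (simp add: powr_add[symmetric] powr_diff)
  define K where "K = nat \<lceil>x\<rceil>"
  have Kx: "real K \<ge> x" unfolding K_def by linarith
  have Kx2: "real K \<le> x + 1" unfolding K_def using x1 by linarith
  have Km: "K < m" using Kx2 x3 mm mpos by linarith
  have mK: "real (m - K) \<ge> real m / 2" using Kx2 x3 mm Km by (simp add: of_nat_diff)
  have bpos: "b > 0" using bb c mpos by (smt (verit) mult_pos_pos powr_gt_zero)
  have P: "measure_pmf.prob (star_first_recovery m b) {k. K \<le> k}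
      \<ge> 1 - (\<Sum>j\<in>{1..<K}. real j) / (b * real (m - K))"
    using key[OF bpos Km, of "{0}" m] Km unfolding star_first_recovery_def by simp
  have sumK: "(\<Sum>j\<in>{1..<K}. real j) \<le> real K * real K"
  proof -
    have "(\<Sum>j\<in>{1..<K}. real j) \<le> (\<Sum>j\<in>{1..<K}. real K)" by (rule sum_mono) simp
    also have "\<dots> = real (K - 1) * real K" by simp
    also have "\<dots> \<le> real K * real K" by (intro mult_right_mono) auto
    finally show ?thesis .
  qed
  have KK: "real K * real K \<le> 4 * (x * x)"
  proof -
    have "real K \<le> 2 * x" using Kx2 x1 by linarith
    then have "real K * real K \<le> (2 * x) * (2 * x)" using Kx x1 by (intro mult_mono) auto
    then show ?thesis by simp
  qed
  have D: "b * real (m - K) \<ge> c * z / 2"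
  proof -
    have "c * z / 2 = c * real m powr (\<epsilon> - 1) * (real m / 2)" using bz by (simp add: algebra_simps) (metis mult.commute)
    also have "\<dots> \<le> b * real (m - K)" using bb mK c bpos by (intro mult_mono) auto
    finally show ?thesis .
  qed
  have Dpos: "c * z / 2 > 0" using c zpos by simp
  have "(\<Sum>j\<in>{1..<K}. real j) / (b * real (m - K)) \<le> 4 * (y * z) / (c * z / 2)"
  proof (rule frac_le)
    show "0 \<le> 4 * (y * z)" using ypos zpos by simp
    show "(\<Sum>j\<in>{1..<K}. real j) \<le> 4 * (y * z)" using sumK KK xx by linarith
  qed (use D Dpos Km in \<open>auto simp: of_nat_diff\<close>)
  also have "\<dots> = 8 / c * y" using zpos c by (simp add: field_simps)
  finally have B: "(\<Sum>j\<in>{1..<K}. real j) / (b * real (m - K)) \<le> 8 / c * y" .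
  have PB: "1 - 8 / c * y \<le> measure_pmf.prob (star_first_recovery m b) {k. K \<le> k}"
    using diff_left_mono[OF B, of 1] P by (rule order_trans)
  have "measure_pmf.prob (star_first_recovery m b) {k. K \<le> k}
      \<le> measure_pmf.prob (star_first_recovery m b) {k. real k \<ge> 1 * real m powr (\<epsilon> / 3)}"
  proof (rule measure_pmf.finite_measure_mono)
    show "{k. K \<le> k} \<subseteq> {k. real k \<ge> 1 * real m powr (\<epsilon> / 3)}"
      using Kx unfolding x_def by auto
  qed simp
  then have "1 - 8 / c * y \<le> measure_pmf.prob (star_first_recovery m b) {k. real k \<ge> 1 * real m powr (\<epsilon> / 3)}"
    by (rule order_trans[OF PB])
  then show ?thesis unfolding y_def .
qed

theorem lemma5:
  fixes \<beta> :: "nat \<Rightarrow> real" and \<epsilon> :: real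
  assumes "0 < \<epsilon>" and "\<epsilon> < 1"
    and "\<exists>c>0. \<forall>\<^sub>F m in sequentially. \<beta> m \<ge> c * real m powr (\<epsilon> - 1)"
  shows "\<exists>C1>0. \<exists>C2>0. \<forall>\<^sub>F m in sequentially.
           measure_pmf.prob (star_first_recovery m (\<beta> m))
             {k. real k \<ge> C1 * real m powr (\<epsilon> / 3)}
           \<ge> 1 - C2 * real m powr (- \<epsilon> / 3)"
proof -
  obtain c where c: "c > 0" and evb: "\<forall>\<^sub>F m in sequentially. \<beta> m \<ge> c * real m powr (\<epsilon> - 1)"
    using assms(3) by blast
  have ev1: "\<forall>\<^sub>F m in sequentially. real m \<ge> 1"
    by (rule eventually_sequentiallyI[of 1]) simp
  have "\<forall>\<^sub>F m in sequentially.
           measure_pmf.prob (star_first_recovery m (\<beta> m))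
             {k. real k \<ge> 1 * real m powr (\<epsilon> / 3)}
           \<ge> 1 - 8 / c * real m powr (- \<epsilon> / 3)"
    using eventually_conj[OF evb eventually_conj[OF ev1 ev]]
    by (rule eventually_mono) (use final_m[OF c assms(1,2)] in blast)
  then show ?thesis using c by (intro exI[of _ 1] exI[of _ "8 / c"] conjI) auto
qed

end
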